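(* Let $T$ be an HST with parameter $2$ and depth $h$, let $R$ be a set of requests issued at leaves of $T$, and consider a synchronous execution of the Arrow protocol on $T$ with request set $R$. Let $n(\ell)$ be the number of level-$\ell$ blocks of the corresponding hierarchical block partition. Then the total cost of the execution equals $\sum_{\ell=0}^{h-1}\big(n(\ell)-n(\ell+1)\big)\cdot\delta(\ell+1)$, where $\delta(\ell)=2^{\ell+1}-2$.
   Context: HST with parameter $2$, depth $h$: rooted tree, all leaves at the same depth, leaves on level $0$, root on level $h$, each edge from a level-$\ell$ node to a child has length $2^{\ell-1}$; two leaves whose lowest common ancestor is on level $\ell$ are at distance $\delta(\ell)=2^{\ell+1}-2$. A level-$\ell$ subtree is the subtree rooted at a level-$\ell$ node. Arrow protocol: each node $u$ has a pointer $\mathrm{link}(u)$ (itself or a neighbour), initially all pointing towards the node $v_0$ of a dummy request $r_0=(v_0,0)$, with $\mathrm{link}(v_0)=v_0$. A request $r=(v,t)$ issued at $v$ at time $t$: if $\mathrm{link}(v)=v$ it is queued behind the previous request at $v$; else atomically $\mathrm{find}(r)$ is sent to $\mathrm{link}(v)$ and $\mathrm{link}(v):=v$. A node $u$ receiving $\mathrm{find}(r)$ from $w$: if $\mathrm{link}(u)=u$, atomically $r$ is queued behind the last request issued at $u$ and $\mathrm{link}(u):=w$; else atomically forwards to $\mathrm{link}(u)$ and sets $\mathrm{link}(u):=w$. In a synchronous execution each message over an edge takes exactly the edge length. The resulting order is $r_0,r_1,\dots,r_{|R|-1}$ ($r_i=(v_i,t_i)$); the latency of $r_i$ ($i\ge1$)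 is the arrival time of $\mathrm{find}(r_i)$ at $v_{i-1}$ minus $t_i$, and the total cost is the sum of the latencies. Hierarchical block partition: for each level $\ell\in[0,h]$, the index set $\{0,\dots,|R|-1\}$ is partitioned into blocks $b^\ell_0,\dots,b^\ell_{n(\ell)-1}$, which are the maximal sets of consecutive indices (in the Arrow order) whose requests all lie in the same level-$\ell$ subtree of $T$, numbered in increasing order of indices. *)

theory Defs
  imports Complex_Main "HOL-Library.Sublist"
begin

text \<open>Nodes of the tree are encoded as paths from the root (lists of child indices).
  The root is [], the children of p are the nodes p @ [i].\<close>

type_synonym node = "nat list"

definition hst :: "node set \<Rightarrow> nat \<Rightarrow> bool" where
  "hst T h \<longleftrightarrow> finite T \<and> [] \<in> T \<and>
     (\<forall>p\<in>T. p \<noteq> [] \<longrightarrow> butlast p \<in> T) \<and>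
     (\<forall>p\<in>T. length p \<le> h) \<and>
     (\<forall>p\<in>T. length p < h \<longrightarrow> (\<exists>i. p @ [i] \<in> T))"

definition leaves :: "node set \<Rightarrow> nat \<Rightarrow> node set" where
  "leaves T h = {p \<in> T. length p = h}"

definition level :: "nat \<Rightarrow> node \<Rightarrow> nat" where
  "level h p = h - length p"

text \<open>Length of the edge between neighbours u and w: the edge from a level-l node to
  a child has length 2^(l-1).\<close>
definition elen :: "nat \<Rightarrow> node \<Rightarrow> node \<Rightarrow> real" where
  "elen h u w = 2 ^ (h - min (length u) (length w) - 1)"

definition delta :: "nat \<Rightarrow> real" where
  "delta l = 2 ^ (l + 1) - 2"

text \<open>Initial pointers: every node points to its neighbour towards v0; v0 points to itself.\<close>
definition link0 :: "node \<Rightarrow> node \<Rightarrow> node" where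
  "link0 v0 u = (if u = v0 then u
                 else if strict_prefix u v0 then take (length u + 1) v0
                 else butlast u)"

type_synonym req = "node \<times> real"   \<comment> \<open>(issuing leaf, issue time)\<close>
type_synonym msg = "req \<times> node \<times> node \<times> real"
  \<comment> \<open>find(r) sent from w to u, arriving at the given time\<close>

record state =
  lnk :: "node \<Rightarrow> node"
  lastreq :: "node \<Rightarrow> req"
  msgs :: "msg set"
  pred :: "req \<Rightarrow> req option"       \<comment> \<open>request r is queued behind pred r\<close>
  arrt :: "req \<Rightarrow> real"             \<comment> \<open>arrival time of find(r) at the node of pred r\<close>

datatype event = Issue req | Deliver msg

fun etime :: "event \<Rightarrow> real" where
  "etime (Issue r) = snd r"
| "etime (Deliver (r, w, u, a)) = a"

fun issues :: "event list \<Rightarrow> req list" where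
  "issues [] = []"
| "issues (Issue r # es) = r # issues es"
| "issues (Deliver m # es) = issues es"

definition init_state :: "node \<Rightarrow> state" where
  "init_state v0 = \<lparr> lnk = link0 v0, lastreq = (\<lambda>_. (v0, 0)), msgs = {},
                     pred = (\<lambda>_. None), arrt = (\<lambda>_. 0) \<rparr>"

text \<open>If link(v) = v it is
  queued locally behind the previous request at v (its latency is 0); otherwise
  find(r) is sent to link(v) and link(v) := v.\<close>
definition issue_step :: "nat \<Rightarrow> req \<Rightarrow> state \<Rightarrow> state" where
  "issue_step h r s = (let v = fst r; t = snd r in
     if lnk s v = v then
       s\<lparr> pred := (pred s)(r := Some (lastreq s v)), arrt := (arrt s)(r := t),
          lastreq := (lastreq s)(v := r) \<rparr>
     else
       s\<lparr> msgs := insert (r, v, lnk s v, t + elen h v (lnk s v)) (msgs s),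
          lnk := (lnk s)(v := v), lastreq := (lastreq s)(v := r) \<rparr>)"

definition deliver_step :: "nat \<Rightarrow> msg \<Rightarrow> state \<Rightarrow> state" where
  "deliver_step h m s = (case m of (r, w, u, a) \<Rightarrow>
     (let s1 = s\<lparr> msgs := msgs s - {m} \<rparr> in
      if lnk s u = u then
        s1\<lparr> pred := (pred s)(r := Some (lastreq s u)), arrt := (arrt s)(r := a),
            lnk := (lnk s)(u := w) \<rparr>
      else
        s1\<lparr> msgs := insert (r, u, lnk s u, a + elen h u (lnk s u)) (msgs s1),
            lnk := (lnk s)(u := w) \<rparr>))"

fun enabled :: "state \<Rightarrow> event \<Rightarrow> bool" where
  "enabled s (Issue r) = True"
| "enabled s (Deliver m) = (m \<in> msgs s)"

fun apply_event :: "nat \<Rightarrow> event \<Rightarrow> state \<Rightarrow> state" where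
  "apply_event h (Issue r) s = issue_step h r s"
| "apply_event h (Deliver m) s = deliver_step h m s"

text \<open>A complete synchronous execution: the atomic steps es (with intermediate states ss)
  occur in nondecreasing order of time (ties resolved arbitrarily), every request of R
  other than the dummy (v0,0) is issued exactly once at its issue time, every message is
  delivered exactly at its arrival time (send time + edge length), and at the end no
  message is in transit.\<close>
definition sync_exec :: "nat \<Rightarrow> node \<Rightarrow> req set \<Rightarrow> event list \<Rightarrow> state list \<Rightarrow> bool" where
  "sync_exec h v0 R es ss \<longleftrightarrow>
     length ss = Suc (length es) \<and> ss ! 0 = init_state v0 \<and>
     (\<forall>i < length es. enabled (ss ! i) (es ! i) \<and>
                      ss ! Suc i = apply_event h (es ! i) (ss ! i)) \<and>
     sorted (map etime es) \<and>
     distinct (issues es) \<and> set (issues es) = R - {(v0, 0)} \<and>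
     msgs (last ss) = {}"

definition arrow_order :: "state \<Rightarrow> req \<Rightarrow> req set \<Rightarrow> req list \<Rightarrow> bool" where
  "arrow_order s r0 R rs \<longleftrightarrow> distinct rs \<and> set rs = R \<and> rs \<noteq> [] \<and> rs ! 0 = r0 \<and>
     (\<forall>i. Suc i < length rs \<longrightarrow> pred s (rs ! Suc i) = Some (rs ! i))"

text \<open>Total cost: sum of latencies of all requests except the dummy.\<close>
definition total_cost :: "state \<Rightarrow> req \<Rightarrow> req set \<Rightarrow> real" where
  "total_cost s r0 R = (\<Sum>r \<in> R - {r0}. arrt s r - snd r)"

text \<open>Indices a..b form a run at level l if all requests rs!i, a <= i <= b, lie in one
  level-l subtree (rooted at a level-l node p, i.e. a node of length h - l).\<close>
definition same_subtree_run :: "nat \<Rightarrow> nat \<Rightarrow> req list \<Rightarrow> nat \<Rightarrow> nat \<Rightarrow> bool" where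
  "same_subtree_run h l rs a b \<longleftrightarrow> a \<le> b \<and> b < length rs \<and>
     (\<exists>p. length p = h - l \<and> (\<forall>i\<in>{a..b}. take (h - l) (fst (rs ! i)) = p))"

definition blocks :: "nat \<Rightarrow> nat \<Rightarrow> req list \<Rightarrow> nat set set" where
  "blocks h l rs = {{a..b} | a b. same_subtree_run h l rs a b \<and>
     (\<forall>a' b'. same_subtree_run h l rs a' b' \<and> {a..b} \<subseteq> {a'..b'} \<longrightarrow> {a'..b'} = {a..b})}"

definition nblocks :: "nat \<Rightarrow> nat \<Rightarrow> req list \<Rightarrow> nat" where
  "nblocks h l rs = card (blocks h l rs)"

end

theory Submission
  imports Defs
begin

fun cpl :: "'a list \<Rightarrow> 'a list \<Rightarrow> nat" where
  "cpl (x#xs) (y#ys) = (if x = y then Suc (cpl xs ys) else 0)"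
| "cpl _ _ = 0"

lemma cpl_self: "cpl v v = length v" by (induct v) auto

lemma cpl_prefix: "prefix u v \<Longrightarrow> cpl v u = length u"
proof (induct u arbitrary: v)
  case Nil then show ?case by (cases v) auto
next
  case (Cons a u) then show ?case by (cases v) auto
qed

lemma cpl_snoc: "cpl v (u@[c]) = (if prefix (u@[c]) v then Suc (length u) else cpl v u)"
proof (induct u arbitrary: v)
  case Nil then show ?case by (cases v) auto
next
  case (Cons a u) then show ?case by (cases v) auto
qed

lemma take_eq_cpl: "m \<le> length xs \<Longrightarrow> m \<le> length ys \<Longrightarrow> (take m xs = take m ys) = (m \<le> cpl xs ys)"
proof (induct xs arbitrary: ys m)
  case Nil then show ?case by auto
next
  case (Cons a xs) then show ?case by (cases ys; cases m) auto
qed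

lemma cpl_le: "cpl xs ys \<le> length xs"
proof (induct xs arbitrary: ys)
  case Nil then show ?case by auto
next
  case (Cons a xs) then show ?case by (cases ys) auto
qed

definition Wn :: "nat \<Rightarrow> nat \<Rightarrow> real" where
  "Wn h k = (\<Sum>j<k. (2::real)^(h-j-1))"

definition D :: "nat \<Rightarrow> node \<Rightarrow> node \<Rightarrow> real" where
  "D h v u = Wn h (length v) + Wn h (length u) - 2 * Wn h (cpl v u)"

definition nbr :: "node \<Rightarrow> node \<Rightarrow> bool" where
  "nbr x y \<longleftrightarrow> (y = butlast x \<and> x \<noteq> []) \<or> (x = butlast y \<and> y \<noteq> [])"

definition dir :: "node \<Rightarrow> node \<Rightarrow> node \<Rightarrow> bool" where
  "dir v w u \<longleftrightarrow> (u = butlast w \<and> w \<noteq> [] \<and> prefix w v) \<or> (w = butlast u \<and> u \<noteq> [] \<and> \<not> prefix u v)"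

lemma nbr_neq: "nbr x y \<Longrightarrow> x \<noteq> y"
proof
  assume n: "nbr x y" and e: "x = y"
  have "length (butlast x) \<noteq> length x" if "x \<noteq> []" for x :: node using that by (cases x) auto
  then show False using n e unfolding nbr_def by metis
qed

lemma nbr_sym: "nbr x y = nbr y x" unfolding nbr_def by auto

lemma dir_nbr: "dir v w u \<Longrightarrow> nbr w u" unfolding dir_def nbr_def by auto

lemma D_self: "D h v v = 0" unfolding D_def by (simp add: cpl_self)

lemma Wn_Suc: "Wn h (Suc k) = Wn h k + 2^(h-k-1)" unfolding Wn_def by simp

lemma D_step: assumes "dir v u x" shows "D h v x = D h v u + elen h u x"
  using assms unfolding dir_def
proof
  assume a: "x = butlast u \<and> u \<noteq> [] \<and> prefix u v"
  then have px: "prefix x v" by (meson prefix_order.trans prefixeq_butlast)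
  have lu: "length u = Suc (length x)" using a by auto
  have w: "Wn h (length u) = Wn h (length x) + 2^(h - length x - 1)" using lu Wn_Suc by simp
  have c: "cpl v x = length x" "cpl v u = length u" using cpl_prefix[OF px] cpl_prefix[of u v] a by auto
  have m: "min (length u) (length x) = length x" using lu by simp
  show ?thesis unfolding D_def elen_def c m w by simp
next
  assume a: "u = butlast x \<and> x \<noteq> [] \<and> \<not> prefix x v"
  then have xe: "x = u @ [last x]" by simp
  have c: "cpl v x = cpl v u" using a xe cpl_snoc[of v u "last x"] by metis
  have lu: "length x = Suc (length u)" using a by auto
  have m: "min (length u) (length x) = length u" using lu by simp
  show ?thesis unfolding D_def elen_def c m lu Wn_Suc by simp
qed

lemma Wn_closed: "k \<le> h \<Longrightarrow> Wn h k = 2^h - 2^(h-k)"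
proof (induct k)
  case 0 then show ?case by (simp add: Wn_def)
next
  case (Suc k)
  have "(2::real)^(h-k) = 2 * 2^(h - k - 1)" using Suc.prems
    by (metis Suc_diff_Suc Suc_le_lessD diff_Suc_1 power_Suc zero_less_diff)
  then show ?case using Suc by (simp add: Wn_Suc)
qed

lemma geo: "(\<Sum>l<m. (2::real)^(l+1)) = 2^(m+1) - 2"
  by (induct m) auto

lemma D_leaf: assumes "length v = h" "length v' = h"
  shows "D h v v' = (\<Sum>l<h. if take (h-l) v \<noteq> take (h-l) v' then 2^(l+1) else 0)"
proof -
  define k where "k = cpl v v'"
  have kh: "k \<le> h" using cpl_le assms k_def by metis
  have "D h v v' = 2^(h-k+1) - 2" unfolding D_def using assms kh k_def
    by (simp add: Wn_closed)
  also have "... = (\<Sum>l<h-k. (2::real)^(l+1))" using geo[of "h-k"] by simp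
  also have "... = (\<Sum>l\<in>{l\<in>{..<h}. l < h - k}. (2::real)^(l+1))"
    by (rule sum.cong) auto
  also have "... = (\<Sum>l<h. if l < h - k then 2^(l+1) else 0)"
    by (rule sum.inter_filter) simp
  also have "... = (\<Sum>l<h. if take (h-l) v \<noteq> take (h-l) v' then 2^(l+1) else 0)"
  proof (rule sum.cong)
    fix l assume "l \<in> {..<h}"
    then have "(take (h-l) v \<noteq> take (h-l) v') = (l < h - k)"
      using take_eq_cpl[of "h-l" v v'] assms k_def kh by auto
    then show "(if l < h - k then (2::real)^(l+1) else 0) = (if take (h-l) v \<noteq> take (h-l) v' then 2^(l+1) else 0)" by simp
  qed simp
  finally show ?thesis .
qed


lemma link0_nbr: assumes F: "x \<noteq> v0" shows "nbr x (link0 v0 x)"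
proof (cases "strict_prefix x v0")
  case True
  then have l: "length x < length v0" by (simp add: prefix_length_less)
  have "x = take (length x) v0" using True by (metis prefix_def append_eq_conv_conj strict_prefix_def)
  then have "butlast (take (Suc (length x)) v0) = x" using l by (simp add: butlast_take)
  moreover have "take (Suc (length x)) v0 \<noteq> []" using l by (cases v0) auto
  ultimately show ?thesis using True F by (simp add: link0_def nbr_def)
next
  case False
  then have "x \<noteq> []" using F by (metis Nil_prefix strict_prefix_def)
  then show ?thesis using False F by (simp add: link0_def nbr_def)
qed

lemma link0_a: "link0 v0 x = x \<or> nbr x (link0 v0 x)"
  using link0_nbr[of x v0] by (cases "x = v0") (auto simp: link0_def)

lemma link0_g: "link0 v0 x = x \<Longrightarrow> x = v0"
  using link0_nbr[of x v0] nbr_neq by fastforce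

lemma link0_b: assumes "link0 v0 x \<noteq> x" shows "link0 v0 (link0 v0 x) \<noteq> x"
proof -
  have xv: "x \<noteq> v0" using assms by (auto simp: link0_def)
  define y where "y = link0 v0 x"
  show ?thesis
  proof (cases "strict_prefix x v0")
    case True
    then have y: "y = take (length x + 1) v0" using xv by (simp add: y_def link0_def)
    have l: "length x < length v0" using True by (simp add: prefix_length_less)
    then have ly: "length y = Suc (length x)" using y by simp
    have py: "prefix y v0" using y by (simp add: take_is_prefix)
    show ?thesis
    proof (cases "y = v0")
      case True
      then have "link0 v0 y = y" by (simp add: link0_def)
      then show ?thesis using xv True unfolding y_def by simp
    next
      case False
      then have "strict_prefix y v0" using py by (simp add: strict_prefix_def)
      then have "link0 v0 y = take (length y + 1) v0" using False by (simp add: link0_def)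
      then have "length (link0 v0 y) \<noteq> length x" using ly l by simp
      then show ?thesis unfolding y_def by metis
    qed
  next
    case False
    then have y: "y = butlast x" using xv by (simp add: y_def link0_def)
    have xne: "x \<noteq> []" using False xv by (metis Nil_prefix strict_prefix_def)
    show ?thesis
    proof (cases "y = v0")
      case True
      then have "link0 v0 y = y" by (simp add: link0_def)
      then show ?thesis using xv True unfolding y_def by simp
    next
      case yv: False
      show ?thesis
      proof (cases "strict_prefix y v0")
        case True
        then have "link0 v0 y = take (length y + 1) v0" using yv by (simp add: link0_def)
        moreover have "take (length y + 1) v0 \<noteq> x"
        proof
          assume e: "take (length y + 1) v0 = x"
          then have "prefix x v0" by (metis take_is_prefix)
          then show False using False xv by (simp add: strict_prefix_def)
        qed
        ultimately show ?thesis unfolding y_def by metis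
      next
        case False
        then have "link0 v0 y = butlast y" using yv by (simp add: link0_def)
        moreover have "length (butlast y) \<noteq> length x" using y xne by (cases x) auto
        ultimately show ?thesis unfolding y_def by metis
      qed
    qed
  qed
qed


definition I1 :: "state \<Rightarrow> bool" where "I1 s \<longleftrightarrow> (\<forall>x. lnk s x = x \<or> nbr x (lnk s x))"
definition I2 :: "state \<Rightarrow> bool" where "I2 s \<longleftrightarrow> (\<forall>x. lnk s x \<noteq> x \<longrightarrow> lnk s (lnk s x) \<noteq> x)"
definition I3 :: "nat \<Rightarrow> state \<Rightarrow> bool" where "I3 h s \<longleftrightarrow> (\<forall>r w u a. (r,w,u,a) \<in> msgs s \<longrightarrow> lnk s u \<noteq> w \<and> lnk s w \<noteq> u \<and> dir (fst r) w u \<and> a = snd r + D h (fst r) u)"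
definition I4 :: "state \<Rightarrow> bool" where "I4 s \<longleftrightarrow> (\<forall>r w u a r' w' u' a'. (r,w,u,a) \<in> msgs s \<longrightarrow> (r',w',u',a') \<in> msgs s \<longrightarrow> {w,u} = {w',u'} \<longrightarrow> (r,w,u,a) = (r',w',u',a'))"
definition I5 :: "state \<Rightarrow> bool" where "I5 s \<longleftrightarrow> (\<forall>u. lnk s u = u \<longrightarrow> fst (lastreq s u) = u)"
definition I6 :: "nat \<Rightarrow> state \<Rightarrow> bool" where "I6 h s \<longleftrightarrow> (\<forall>r p. pred s r = Some p \<longrightarrow> arrt s r = snd r + D h (fst r) (fst p))"

definition Inv :: "nat \<Rightarrow> state \<Rightarrow> bool" where
"Inv h s \<longleftrightarrow> I1 s \<and> I2 s \<and> I3 h s \<and> I4 s \<and> I5 s \<and> I6 h s"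

lemma InvI:
  assumes "\<And>x. lnk s x = x \<or> nbr x (lnk s x)"
  and "\<And>x. lnk s x \<noteq> x \<Longrightarrow> lnk s (lnk s x) \<noteq> x"
  and "\<And>r w u a. (r,w,u,a) \<in> msgs s \<Longrightarrow> lnk s u \<noteq> w \<and> lnk s w \<noteq> u \<and> dir (fst r) w u \<and> a = snd r + D h (fst r) u"
  and "\<And>r w u a r' w' u' a'. (r,w,u,a) \<in> msgs s \<Longrightarrow> (r',w',u',a') \<in> msgs s \<Longrightarrow> {w,u} = {w',u'} \<Longrightarrow> (r,w,u,a) = (r',w',u',a')"
  and "\<And>u. lnk s u = u \<Longrightarrow> fst (lastreq s u) = u"
  and "\<And>r p. pred s r = Some p \<Longrightarrow> arrt s r = snd r + D h (fst r) (fst p)"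
  shows "Inv h s"
proof -
  have "I1 s" unfolding I1_def using assms(1) by blast
  moreover have "I2 s" unfolding I2_def using assms(2) by blast
  moreover have "I3 h s" unfolding I3_def using assms(3) by blast
  moreover have "I4 s" unfolding I4_def using assms(4) by blast
  moreover have "I5 s" unfolding I5_def using assms(5) by blast
  moreover have "I6 h s" unfolding I6_def using assms(6) by blast
  ultimately show ?thesis unfolding Inv_def by blast
qed

lemma InvD1: "Inv h s \<Longrightarrow> lnk s x = x \<or> nbr x (lnk s x)"
  unfolding Inv_def I1_def by blast
lemma InvD2: "Inv h s \<Longrightarrow> lnk s x \<noteq> x \<Longrightarrow> lnk s (lnk s x) \<noteq> x"
  unfolding Inv_def I2_def by blast
lemma InvD3: "Inv h s \<Longrightarrow> (r,w,u,a) \<in> msgs s \<Longrightarrow> lnk s u \<noteq> w \<and> lnk s w \<noteq> u \<and> dir (fst r) w u \<and> a = snd r + D h (fst r) u"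
  unfolding Inv_def I3_def by blast
lemma InvD4: "Inv h s \<Longrightarrow> (r,w,u,a) \<in> msgs s \<Longrightarrow> (r',w',u',a') \<in> msgs s \<Longrightarrow> {w,u} = {w',u'} \<Longrightarrow> (r,w,u,a) = (r',w',u',a')"
  unfolding Inv_def I4_def by blast
lemma InvD5: "Inv h s \<Longrightarrow> lnk s u = u \<Longrightarrow> fst (lastreq s u) = u"
  unfolding Inv_def I5_def by blast
lemma InvD6: "Inv h s \<Longrightarrow> pred s r = Some p \<Longrightarrow> arrt s r = snd r + D h (fst r) (fst p)"
  unfolding Inv_def I6_def by blast

lemma Inv_init: "Inv h (init_state v0)"
proof (rule InvI)
  fix x show "lnk (init_state v0) x = x \<or> nbr x (lnk (init_state v0) x)"
    using link0_a[of v0 x] by (simp add: init_state_def)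
next
  fix x show "lnk (init_state v0) x \<noteq> x \<Longrightarrow> lnk (init_state v0) (lnk (init_state v0) x) \<noteq> x"
    using link0_b[of v0 x] by (simp add: init_state_def)
next
  fix u show "lnk (init_state v0) u = u \<Longrightarrow> fst (lastreq (init_state v0) u) = u"
    using link0_g[of v0 u] by (auto simp add: init_state_def)
qed (simp_all add: init_state_def)

lemma dir_issue: assumes "nbr v y" shows "dir v v y"
proof -
  have "(y = butlast v \<and> v \<noteq> []) \<or> (v = butlast y \<and> y \<noteq> [])" using assms unfolding nbr_def by blast
  then show ?thesis
proof
  assume "y = butlast v \<and> v \<noteq> []" then show ?thesis by (simp add: dir_def)
next
  assume a: "v = butlast y \<and> y \<noteq> []"
  then have "length v < length y" by (cases y rule: rev_cases) auto
  then have "\<not> prefix y v" using prefix_length_le by fastforce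
  then show ?thesis using a by (simp add: dir_def)
qed
qed


lemma prefix_same_len: "prefix x v \<Longrightarrow> prefix w v \<Longrightarrow> length x = length w \<Longrightarrow> x = w"
  by (metis prefix_length_prefix prefix_order.antisym order_refl)

lemma dir_forward: assumes d: "dir v w u" and n: "nbr u x" and xw: "x \<noteq> w"
  shows "dir v u x"
proof -
  from n have "(x = butlast u \<and> u \<noteq> []) \<or> (u = butlast x \<and> x \<noteq> [])" unfolding nbr_def by blast
  then show ?thesis
  proof
    assume a: "x = butlast u \<and> u \<noteq> []"
    from d have "(u = butlast w \<and> w \<noteq> [] \<and> prefix w v) \<or> (w = butlast u \<and> u \<noteq> [] \<and> \<not> prefix u v)"
      unfolding dir_def by blast
    then show ?thesis
    proof
      assume b: "u = butlast w \<and> w \<noteq> [] \<and> prefix w v"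
      then have "prefix u v" by (meson prefix_order.trans prefixeq_butlast)
      then show ?thesis using a unfolding dir_def by blast
    next
      assume "w = butlast u \<and> u \<noteq> [] \<and> \<not> prefix u v"
      then show ?thesis using a xw by blast
    qed
  next
    assume a: "u = butlast x \<and> x \<noteq> []"
    have "\<not> prefix x v"
    proof
      assume px: "prefix x v"
      from d have "(u = butlast w \<and> w \<noteq> [] \<and> prefix w v) \<or> (w = butlast u \<and> u \<noteq> [] \<and> \<not> prefix u v)"
        unfolding dir_def by blast
      then show False
      proof
        assume b: "u = butlast w \<and> w \<noteq> [] \<and> prefix w v"
        have "length x = length w" using a b by (cases x rule: rev_cases; cases w rule: rev_cases) auto
        then show False using prefix_same_len[OF px] b xw by blast
      next
        assume b: "w = butlast u \<and> u \<noteq> [] \<and> \<not> prefix u v"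
        have "prefix u v" using a px by (meson prefix_order.trans prefixeq_butlast)
        then show False using b by blast
      qed
    qed
    then show ?thesis using a unfolding dir_def by blast
  qed
qed

lemma Inv_issue: assumes I: "Inv h s" shows "Inv h (issue_step h r s)"
proof (cases "lnk s (fst r) = fst r")
  case True
  have s': "issue_step h r s = s\<lparr> pred := (pred s)(r := Some (lastreq s (fst r))), arrt := (arrt s)(r := snd r),
          lastreq := (lastreq s)(fst r := r) \<rparr>" using True unfolding issue_step_def Let_def by simp
  show ?thesis unfolding s'
  proof (rule InvI)
    fix x show "lnk (s\<lparr> pred := (pred s)(r := Some (lastreq s (fst r))), arrt := (arrt s)(r := snd r),
          lastreq := (lastreq s)(fst r := r) \<rparr>) x = x \<or> nbr x (lnk (s\<lparr> pred := (pred s)(r := Some (lastreq s (fst r))), arrt := (arrt s)(r := snd r),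
          lastreq := (lastreq s)(fst r := r) \<rparr>) x)" using InvD1[OF I] by simp
  next
    fix x show "lnk (s\<lparr> pred := (pred s)(r := Some (lastreq s (fst r))), arrt := (arrt s)(r := snd r),
          lastreq := (lastreq s)(fst r := r) \<rparr>) x \<noteq> x \<Longrightarrow> lnk (s\<lparr> pred := (pred s)(r := Some (lastreq s (fst r))), arrt := (arrt s)(r := snd r),
          lastreq := (lastreq s)(fst r := r) \<rparr>) (lnk (s\<lparr> pred := (pred s)(r := Some (lastreq s (fst r))), arrt := (arrt s)(r := snd r),
          lastreq := (lastreq s)(fst r := r) \<rparr>) x) \<noteq> x" using InvD2[OF I] by simp
  next
    fix r1 w u a assume "(r1, w, u, a) \<in> msgs (s\<lparr> pred := (pred s)(r := Some (lastreq s (fst r))), arrt := (arrt s)(r := snd r),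
          lastreq := (lastreq s)(fst r := r) \<rparr>)"
    then show "lnk (s\<lparr> pred := (pred s)(r := Some (lastreq s (fst r))), arrt := (arrt s)(r := snd r),
          lastreq := (lastreq s)(fst r := r) \<rparr>) u \<noteq> w \<and> lnk (s\<lparr> pred := (pred s)(r := Some (lastreq s (fst r))), arrt := (arrt s)(r := snd r),
          lastreq := (lastreq s)(fst r := r) \<rparr>) w \<noteq> u \<and> dir (fst r1) w u \<and> a = snd r1 + D h (fst r1) u"
      using InvD3[OF I] by simp
  next
    fix r1 w u a r' w' u' a' show "(r1, w, u, a) \<in> msgs (s\<lparr> pred := (pred s)(r := Some (lastreq s (fst r))), arrt := (arrt s)(r := snd r),
          lastreq := (lastreq s)(fst r := r) \<rparr>) \<Longrightarrow> (r', w', u', a') \<in> msgs (s\<lparr> pred := (pred s)(r := Some (lastreq s (fst r))), arrt := (arrt s)(r := snd r),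
          lastreq := (lastreq s)(fst r := r) \<rparr>) \<Longrightarrow> {w, u} = {w', u'} \<Longrightarrow> (r1, w, u, a) = (r', w', u', a')"
      using InvD4[OF I] by simp
  next
    fix u show "lnk (s\<lparr> pred := (pred s)(r := Some (lastreq s (fst r))), arrt := (arrt s)(r := snd r),
          lastreq := (lastreq s)(fst r := r) \<rparr>) u = u \<Longrightarrow> fst (lastreq (s\<lparr> pred := (pred s)(r := Some (lastreq s (fst r))), arrt := (arrt s)(r := snd r),
          lastreq := (lastreq s)(fst r := r) \<rparr>) u) = u"
      using InvD5[OF I, of u] by (cases "u = fst r") auto
  next
    fix r1 p show "pred (s\<lparr> pred := (pred s)(r := Some (lastreq s (fst r))), arrt := (arrt s)(r := snd r),
          lastreq := (lastreq s)(fst r := r) \<rparr>) r1 = Some p \<Longrightarrow> arrt (s\<lparr> pred := (pred s)(r := Some (lastreq s (fst r))), arrt := (arrt s)(r := snd r),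
          lastreq := (lastreq s)(fst r := r) \<rparr>) r1 = snd r1 + D h (fst r1) (fst p)"
      using InvD6[OF I, of r1 p] InvD5[OF I, of "fst r"] True D_self by (cases "r1 = r") auto
  qed
next
  case False
  define v where "v = fst r"
  define y where "y = lnk s v"
  have vy: "y \<noteq> v" using False v_def y_def by simp
  have nb: "nbr v y" using InvD1[OF I, of v] vy unfolding y_def by metis
  have yv: "lnk s y \<noteq> v" using InvD2[OF I, of v] vy unfolding y_def by metis
  have dr: "dir (fst r) v y" using dir_issue[OF nb] v_def by simp
  have ds: "snd r + elen h v y = snd r + D h (fst r) y" using D_step[OF dr[unfolded v_def[symmetric]], of h] v_def
    D_self by simp
  define s' where "s' = s\<lparr> msgs := insert (r, v, y, snd r + elen h v y) (msgs s),
          lnk := (lnk s)(v := v), lastreq := (lastreq s)(v := r) \<rparr>"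
  have s': "issue_step h r s = s'"
    using False unfolding issue_step_def Let_def v_def y_def s'_def by simp
  have L: "lnk s' = (lnk s)(v := v)" "msgs s' = insert (r, v, y, snd r + elen h v y) (msgs s)"
    "lastreq s' = (lastreq s)(v := r)" "pred s' = pred s" "arrt s' = arrt s" unfolding s'_def by simp_all
  show ?thesis unfolding s'
  proof (rule InvI)
    fix x show "lnk s' x = x \<or> nbr x (lnk s' x)" using InvD1[OF I, of x] unfolding L by simp
  next
    fix x assume "lnk s' x \<noteq> x"
    then have xv: "x \<noteq> v" and z: "lnk s x \<noteq> x" unfolding L by (auto split: if_splits)
    show "lnk s' (lnk s' x) \<noteq> x"
    proof (cases "lnk s x = v")
      case True then show ?thesis using xv unfolding L by simp
    next
      case False then show ?thesis using xv InvD2[OF I z] unfolding L by simp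
    qed
  next
    fix r1 w u a assume m: "(r1, w, u, a) \<in> msgs s'"
    show "lnk s' u \<noteq> w \<and> lnk s' w \<noteq> u \<and> dir (fst r1) w u \<and> a = snd r1 + D h (fst r1) u"
    proof (cases "(r1, w, u, a) = (r, v, y, snd r + elen h v y)")
      case True then show ?thesis using vy yv dr ds unfolding L by auto
    next
      case False
      then have m0: "(r1, w, u, a) \<in> msgs s" using m unfolding L by auto
      note o = InvD3[OF I m0]
      then have "w \<noteq> u" using dir_nbr nbr_neq by blast
      then show ?thesis using o unfolding L by auto
    qed
  next
    fix r1 w u a r' w' u' a'
    assume m1: "(r1, w, u, a) \<in> msgs s'" and m2: "(r', w', u', a') \<in> msgs s'" and e: "{w, u} = {w', u'}"
    have nn: False if "(r2, w2, u2, a2) \<in> msgs s" "{w2, u2} = {v, y}" for r2 w2 u2 a2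
    proof -
      note o = InvD3[OF I that(1)]
      from that(2) have "(w2 = v \<and> u2 = y) \<or> (w2 = y \<and> u2 = v)" by (auto simp: doubleton_eq_iff)
      then show False using o y_def by auto
    qed
    show "(r1, w, u, a) = (r', w', u', a')"
    proof (cases "(r1, w, u, a) = (r, v, y, snd r + elen h v y)")
      case T1: True
      show ?thesis
      proof (cases "(r', w', u', a') = (r, v, y, snd r + elen h v y)")
        case True then show ?thesis using T1 by simp
      next
        case False then have "(r', w', u', a') \<in> msgs s" using m2 unfolding L by auto
        then show ?thesis using nn[of r' w' u' a'] e T1 by simp
      qed
    next
      case F1: False
      then have m1': "(r1, w, u, a) \<in> msgs s" using m1 unfolding L by auto
      show ?thesis
      proof (cases "(r', w', u', a') = (r, v, y, snd r + elen h v y)")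
        case True then show ?thesis using nn[OF m1'] e by simp
      next
        case False then have "(r', w', u', a') \<in> msgs s" using m2 unfolding L by auto
        then show ?thesis using InvD4[OF I m1'] e by simp
      qed
    qed
  next
    fix u assume "lnk s' u = u"
    then show "fst (lastreq s' u) = u" using InvD5[OF I, of u] v_def unfolding L by (cases "u = v") auto
  next
    fix r1 p show "pred s' r1 = Some p \<Longrightarrow> arrt s' r1 = snd r1 + D h (fst r1) (fst p)"
      using InvD6[OF I] unfolding L by simp
  qed
qed


lemma Inv_deliver: assumes I: "Inv h s" and mm: "m \<in> msgs s" shows "Inv h (deliver_step h m s)"
proof -
  obtain r w u a where mdef: "m = (r, w, u, a)" by (cases m) auto
  have mi: "(r, w, u, a) \<in> msgs s" using mm mdef by simp
  note o = InvD3[OF I mi]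
  have uw: "lnk s u \<noteq> w" and wu: "lnk s w \<noteq> u" and dr: "dir (fst r) w u" and aa: "a = snd r + D h (fst r) u"
    using o by auto
  have nwu: "nbr w u" using dr dir_nbr by blast
  then have wneu: "w \<noteq> u" using nbr_neq by blast
  have uniq: "(r1, w1, u1, a1) = m" if "(r1, w1, u1, a1) \<in> msgs s" "{w1, u1} = {w, u}" for r1 w1 u1 a1
    using InvD4[OF I that(1) mi] that(2) mdef by simp
  show ?thesis
  proof (cases "lnk s u = u")
    case True
    define s' where "s' = s\<lparr> msgs := msgs s - {m}, pred := (pred s)(r := Some (lastreq s u)), arrt := (arrt s)(r := a),
            lnk := (lnk s)(u := w) \<rparr>"
    have s': "deliver_step h m s = s'" using True unfolding deliver_step_def Let_def s'_def mdef by simp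
    have L: "lnk s' = (lnk s)(u := w)" "msgs s' = msgs s - {m}"
      "lastreq s' = lastreq s" "pred s' = (pred s)(r := Some (lastreq s u))" "arrt s' = (arrt s)(r := a)"
      unfolding s'_def by simp_all
    show ?thesis unfolding s'
    proof (rule InvI)
      fix x show "lnk s' x = x \<or> nbr x (lnk s' x)" using InvD1[OF I, of x] nwu nbr_sym unfolding L by auto
    next
      fix x assume "lnk s' x \<noteq> x"
      show "lnk s' (lnk s' x) \<noteq> x"
      proof (cases "x = u")
        case True then show ?thesis using wneu wu unfolding L by simp
      next
        case xu: False
        then have z: "lnk s x \<noteq> x" using \<open>lnk s' x \<noteq> x\<close> unfolding L by simp
        show ?thesis
        proof (cases "lnk s x = u")
          case True
          then have "x \<noteq> w" using wu by auto
          then show ?thesis using True xu unfolding L by simp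
        next
          case False then show ?thesis using xu InvD2[OF I z] unfolding L by simp
        qed
      qed
    next
      fix r1 w1 u1 a1 assume m1: "(r1, w1, u1, a1) \<in> msgs s'"
      then have m0: "(r1, w1, u1, a1) \<in> msgs s" and ne: "(r1, w1, u1, a1) \<noteq> m" unfolding L by auto
      note o1 = InvD3[OF I m0]
      have A: "lnk s' u1 \<noteq> w1"
      proof (cases "u1 = u")
        case True
        then have "w1 \<noteq> w" using uniq[OF m0] ne by auto
        then show ?thesis using True unfolding L by simp
      next
        case False then show ?thesis using o1 unfolding L by simp
      qed
      have B: "lnk s' w1 \<noteq> u1"
      proof (cases "w1 = u")
        case True
        then have "u1 \<noteq> w" using uniq[OF m0] ne by (auto simp: doubleton_eq_iff)
        then show ?thesis using True unfolding L by simp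
      next
        case False then show ?thesis using o1 unfolding L by simp
      qed
      show "lnk s' u1 \<noteq> w1 \<and> lnk s' w1 \<noteq> u1 \<and> dir (fst r1) w1 u1 \<and> a1 = snd r1 + D h (fst r1) u1"
        using A B o1 by simp
    next
      fix r1 w1 u1 a1 r' w' u' a'
      assume q: "(r1, w1, u1, a1) \<in> msgs s'" "(r', w', u', a') \<in> msgs s'" "{w1, u1} = {w', u'}"
      have q1: "(r1, w1, u1, a1) \<in> msgs s" "(r', w', u', a') \<in> msgs s" using q(1,2) unfolding L by auto
      show "(r1, w1, u1, a1) = (r', w', u', a')" by (rule InvD4[OF I q1 q(3)])
    next
      fix v assume "lnk s' v = v"
      then show "fst (lastreq s' v) = v" using InvD5[OF I, of v] wneu unfolding L by (cases "v = u") auto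
    next
      fix r1 p assume "pred s' r1 = Some p"
      then show "arrt s' r1 = snd r1 + D h (fst r1) (fst p)"
        using InvD6[OF I, of r1 p] InvD5[OF I True] aa unfolding L by (cases "r1 = r") auto
    qed
  next
    case False
    define x where "x = lnk s u"
    have xu: "x \<noteq> u" using False x_def by simp
    have nux: "nbr u x" using InvD1[OF I, of u] xu x_def by metis
    have xw: "x \<noteq> w" using uw x_def by simp
    have xnu: "lnk s x \<noteq> u" using InvD2[OF I False] x_def by simp
    have dr2: "dir (fst r) u x" using dir_forward[OF dr nux xw] .
    have ds: "a + elen h u x = snd r + D h (fst r) x" using D_step[OF dr2, of h] aa by simp
    define n where "n = (r, u, x, a + elen h u x)"
    define s' where "s' = s\<lparr> msgs := insert n (msgs s - {m}), lnk := (lnk s)(u := w) \<rparr>"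
    have s': "deliver_step h m s = s'" using False unfolding deliver_step_def Let_def s'_def mdef n_def x_def by simp
    have L: "lnk s' = (lnk s)(u := w)" "msgs s' = insert n (msgs s - {m})"
      "lastreq s' = lastreq s" "pred s' = pred s" "arrt s' = arrt s"
      unfolding s'_def by simp_all
    have nn: False if "(r2, w2, u2, a2) \<in> msgs s" "{w2, u2} = {u, x}" for r2 w2 u2 a2
    proof -
      note o2 = InvD3[OF I that(1)]
      from that(2) have "(w2 = u \<and> u2 = x) \<or> (w2 = x \<and> u2 = u)" by (auto simp: doubleton_eq_iff)
      then show False using o2 x_def by auto
    qed
    show ?thesis unfolding s'
    proof (rule InvI)
      fix x show "lnk s' x = x \<or> nbr x (lnk s' x)" using InvD1[OF I, of x] nwu nbr_sym unfolding L by auto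
    next
      fix x assume "lnk s' x \<noteq> x"
      show "lnk s' (lnk s' x) \<noteq> x"
      proof (cases "x = u")
        case True then show ?thesis using wneu wu unfolding L by simp
      next
        case xu: False
        then have z: "lnk s x \<noteq> x" using \<open>lnk s' x \<noteq> x\<close> unfolding L by simp
        show ?thesis
        proof (cases "lnk s x = u")
          case True
          then have "x \<noteq> w" using wu by auto
          then show ?thesis using True xu unfolding L by simp
        next
          case False then show ?thesis using xu InvD2[OF I z] unfolding L by simp
        qed
      qed
    next
      fix r1 w1 u1 a1 assume m1: "(r1, w1, u1, a1) \<in> msgs s'"
      show "lnk s' u1 \<noteq> w1 \<and> lnk s' w1 \<noteq> u1 \<and> dir (fst r1) w1 u1 \<and> a1 = snd r1 + D h (fst r1) u1"
      proof (cases "(r1, w1, u1, a1) = n")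
        case True
        then show ?thesis using xnu xw xu dr2 ds unfolding L n_def by auto
      next
        case nF: False
        then have m0: "(r1, w1, u1, a1) \<in> msgs s" and ne: "(r1, w1, u1, a1) \<noteq> m" using m1 unfolding L by auto
        note o1 = InvD3[OF I m0]
        have A: "lnk s' u1 \<noteq> w1"
        proof (cases "u1 = u")
          case True
          then have "w1 \<noteq> w" using uniq[OF m0] ne by auto
          then show ?thesis using True unfolding L by simp
        next
          case False then show ?thesis using o1 unfolding L by simp
        qed
        have B: "lnk s' w1 \<noteq> u1"
        proof (cases "w1 = u")
          case True
          then have "u1 \<noteq> w" using uniq[OF m0] ne by (auto simp: doubleton_eq_iff)
          then show ?thesis using True unfolding L by simp
        next
          case False then show ?thesis using o1 unfolding L by simp
        qed
        show ?thesis using A B o1 by simp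
      qed
    next
      fix r1 w1 u1 a1 r' w' u' a'
      assume m1: "(r1, w1, u1, a1) \<in> msgs s'" and m2: "(r', w', u', a') \<in> msgs s'" and e: "{w1, u1} = {w', u'}"
      show "(r1, w1, u1, a1) = (r', w', u', a')"
      proof (cases "(r1, w1, u1, a1) = n")
        case T1: True
        show ?thesis
        proof (cases "(r', w', u', a') = n")
          case True then show ?thesis using T1 by simp
        next
          case False then have "(r', w', u', a') \<in> msgs s" using m2 unfolding L by auto
          then show ?thesis using nn[of r' w' u' a'] e T1 unfolding n_def by simp
        qed
      next
        case F1: False
        then have m1': "(r1, w1, u1, a1) \<in> msgs s" using m1 unfolding L by auto
        show ?thesis
        proof (cases "(r', w', u', a') = n")
          case True then show ?thesis using nn[OF m1'] e unfolding n_def by simp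
        next
          case False then have "(r', w', u', a') \<in> msgs s" using m2 unfolding L by auto
          then show ?thesis using InvD4[OF I m1'] e by simp
        qed
      qed
    next
      fix v assume "lnk s' v = v"
      then show "fst (lastreq s' v) = v" using InvD5[OF I, of v] wneu unfolding L by (cases "v = u") auto
    next
      fix r1 p show "pred s' r1 = Some p \<Longrightarrow> arrt s' r1 = snd r1 + D h (fst r1) (fst p)"
        using InvD6[OF I] unfolding L by simp
    qed
  qed
qed

lemma Inv_event: "Inv h s \<Longrightarrow> enabled s e \<Longrightarrow> Inv h (apply_event h e s)"
  by (cases e) (auto intro: Inv_issue Inv_deliver)

lemma Inv_exec: assumes "sync_exec h v0 R es ss" shows "Inv h (last ss)"
proof -
  have len: "length ss = Suc (length es)" and s0: "ss ! 0 = init_state v0"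
    and st: "\<And>i. i < length es \<Longrightarrow> enabled (ss ! i) (es ! i) \<and> ss ! Suc i = apply_event h (es ! i) (ss ! i)"
    using assms unfolding sync_exec_def by auto
  have "i \<le> length es \<Longrightarrow> Inv h (ss ! i)" for i
  proof (induct i)
    case 0 then show ?case using s0 Inv_init by simp
  next
    case (Suc i)
    then have "i < length es" by simp
    then show ?case using st[of i] Inv_event Suc by auto
  qed
  moreover have "last ss = ss ! length es"
  proof -
    have "ss \<noteq> []" using len by auto
    then show ?thesis using len by (simp add: last_conv_nth)
  qed
  ultimately show ?thesis by simp
qed


definition run :: "(nat \<Rightarrow> 'b) \<Rightarrow> nat \<Rightarrow> nat \<Rightarrow> nat \<Rightarrow> bool" where
  "run f n a b \<longleftrightarrow> a \<le> b \<and> b < n \<and> (\<forall>i\<in>{a..b}. f i = f a)"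

lemma run_le: "run f n a b \<Longrightarrow> a \<le> b" unfolding run_def by blast
lemma run_lt: "run f n a b \<Longrightarrow> b < n" unfolding run_def by blast
lemma run_eq: "run f n a b \<Longrightarrow> i \<in> {a..b} \<Longrightarrow> f i = f a" unfolding run_def by blast

lemma Min_ival: "(a::nat) \<le> b \<Longrightarrow> Min {a..b} = a"
  by (rule Min_eqI) auto

lemma blocks_card:
  assumes n: "0 < n"
  shows "card {{a..b} | a b. run f n a b \<and> (\<forall>a' b'. run f n a' b' \<and> {a..b} \<subseteq> {a'..b'} \<longrightarrow> {a'..b'} = {a..b})}
       = Suc (card {i. Suc i < n \<and> f i \<noteq> f (Suc i)})"
proof -
  define B where "B = {{a..b} | a b. run f n a b \<and> (\<forall>a' b'. run f n a' b' \<and> {a..b} \<subseteq> {a'..b'} \<longrightarrow> {a'..b'} = {a..b})}"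
  define S where "S = {a. a < n \<and> (a = 0 \<or> f (a - 1) \<noteq> f a)}"
  define C where "C = {i. Suc i < n \<and> f i \<noteq> f (Suc i)}"
  have inj: "inj_on Min B"
  proof (rule inj_onI)
    fix X Y assume X: "X \<in> B" and Y: "Y \<in> B" and e: "Min X = Min Y"
    from X obtain a b where Xd: "X = {a..b}" and ra: "run f n a b"
      and ma: "\<forall>a' b'. run f n a' b' \<and> {a..b} \<subseteq> {a'..b'} \<longrightarrow> {a'..b'} = {a..b}" unfolding B_def by blast
    from Y obtain c d where Yd: "Y = {c..d}" and rc: "run f n c d"
      and mc: "\<forall>a' b'. run f n a' b' \<and> {c..d} \<subseteq> {a'..b'} \<longrightarrow> {a'..b'} = {c..d}" unfolding B_def by blast
    have "a = c" using e Xd Yd Min_ival[OF run_le[OF ra]] Min_ival[OF run_le[OF rc]] by simp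
    show "X = Y"
    proof (cases "b \<le> d")
      case True
      then have "{a..b} \<subseteq> {c..d}" using \<open>a = c\<close> by auto
      then show ?thesis using ma rc Xd Yd by blast
    next
      case False
      then have "{c..d} \<subseteq> {a..b}" using \<open>a = c\<close> by auto
      then show ?thesis using mc ra Xd Yd by blast
    qed
  qed
  have img: "Min ` B = S"
  proof
    show "Min ` B \<subseteq> S"
    proof
      fix z assume "z \<in> Min ` B"
      then obtain X where X: "X \<in> B" and z: "z = Min X" by blast
      from X obtain a b where Xd: "X = {a..b}" and ra: "run f n a b"
        and ma: "\<forall>a' b'. run f n a' b' \<and> {a..b} \<subseteq> {a'..b'} \<longrightarrow> {a'..b'} = {a..b}" unfolding B_def by blast
      have za: "z = a" using z Xd Min_ival[OF run_le[OF ra]] by simp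
      have "a = 0 \<or> f (a - 1) \<noteq> f a"
      proof (rule ccontr)
        assume "\<not> (a = 0 \<or> f (a - 1) \<noteq> f a)"
        then have a0: "a \<noteq> 0" and fe: "f (a - 1) = f a" by auto
        have "run f n (a - 1) b" unfolding run_def
        proof (intro conjI ballI)
          show "a - 1 \<le> b" using run_le[OF ra] by simp
          show "b < n" using run_lt[OF ra] by simp
          fix i assume "i \<in> {a - 1..b}"
          then have "i = a - 1 \<or> i \<in> {a..b}" using a0 by auto
          moreover have "\<forall>i\<in>{a..b}. f i = f a" using run_eq[OF ra] by blast
          ultimately show "f i = f (a - 1)" using fe by metis
        qed
        moreover have "{a..b} \<subseteq> {a - 1..b}" by auto
        ultimately have "{a - 1..b} = {a..b}" using ma[rule_format, of "a - 1" b] by blast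
        moreover have "a - 1 \<in> {a - 1..b}" using run_le[OF ra] by simp
        moreover have "a - 1 \<notin> {a..b}" using a0 by auto
        ultimately show False by blast
      qed
      then show "z \<in> S" using za run_le[OF ra] run_lt[OF ra] unfolding S_def by simp
    qed
  next
    show "S \<subseteq> Min ` B"
    proof
      fix a assume aS: "a \<in> S"
      define M where "M = {b. run f n a b}"
      have fin: "finite M" unfolding M_def run_def by (rule finite_subset[of _ "{..<n}"]) auto
      have ne: "a \<in> M" using aS unfolding M_def run_def S_def by simp
      define b where "b = Max M"
      have rb: "run f n a b" using Max_in[OF fin] ne unfolding b_def M_def by blast
      have bmax: "b' \<le> b" if "run f n a b'" for b' using Max_ge[OF fin] that unfolding b_def M_def by blast
      have "{a..b} \<in> B"
        unfolding B_def
      proof (intro CollectI exI conjI allI impI)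
        show "{a..b} = {a..b}" ..
        show "run f n a b" by (rule rb)
        fix a' b' assume q: "run f n a' b' \<and> {a..b} \<subseteq> {a'..b'}"
        have ab: "a \<le> b" using run_le[OF rb] by simp
        then have le: "a' \<le> a" "b \<le> b'" using q by auto
        have "a' = a"
        proof (rule ccontr)
          assume "a' \<noteq> a"
          then have lt: "a' < a" using le by simp
          then have "a \<noteq> 0" by simp
          then have fne: "f (a - 1) \<noteq> f a" using aS unfolding S_def by simp
          have "a - 1 \<in> {a'..b'}" "a \<in> {a'..b'}" using lt le ab by auto
          then show False using run_eq[of f n a' b' "a - 1"] run_eq[of f n a' b' a] q fne by simp
        qed
        then have "b' \<le> b" using q bmax by blast
        then show "{a'..b'} = {a..b}" using \<open>a' = a\<close> le by auto
      qed
      moreover have "Min {a..b} = a" using Min_ival[OF run_le[OF rb]] by simp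
      ultimately show "a \<in> Min ` B" by (metis image_eqI)
    qed
  qed
  have finC: "finite C" unfolding C_def by (rule finite_subset[of _ "{..<n}"]) auto
  have SC: "S = insert 0 (Suc ` C)"
  proof
    show "S \<subseteq> insert 0 (Suc ` C)"
    proof
      fix a assume "a \<in> S"
      then show "a \<in> insert 0 (Suc ` C)" unfolding S_def C_def
        by (cases a) (auto simp: image_iff)
    qed
    show "insert 0 (Suc ` C) \<subseteq> S" unfolding S_def C_def using n by auto
  qed
  have "card S = Suc (card C)" unfolding SC using finC by (simp add: card_image)
  moreover have "card B = card S" using card_image[OF inj] img by simp
  ultimately show ?thesis unfolding B_def C_def by simp
qed

lemma sum_parts: "(\<Sum>l<h. (c l - c (Suc l)) * d (Suc l)) = (\<Sum>l<h. c l * (d (Suc l) - d l)) + c 0 * d 0 - c h * (d h :: real)"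
  by (induct h) (auto simp: algebra_simps)


lemma ssr_run:
  assumes len: "\<And>i. i < length rs \<Longrightarrow> length (fst (rs ! i)) = h"
  shows "same_subtree_run h l rs = run (\<lambda>i. take (h - l) (fst (rs ! i))) (length rs)"
proof (intro ext)
  fix a b
  show "same_subtree_run h l rs a b = run (\<lambda>i. take (h - l) (fst (rs ! i))) (length rs) a b"
  proof
    assume "same_subtree_run h l rs a b"
    then obtain p where ab: "a \<le> b" "b < length rs" and p: "\<forall>i\<in>{a..b}. take (h - l) (fst (rs ! i)) = p"
      unfolding same_subtree_run_def by blast
    have "take (h - l) (fst (rs ! a)) = p" using p ab by simp
    then show "run (\<lambda>i. take (h - l) (fst (rs ! i))) (length rs) a b" using ab p unfolding run_def by simp
  next
    assume r: "run (\<lambda>i. take (h - l) (fst (rs ! i))) (length rs) a b"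
    have ab: "a \<le> b" "b < length rs" using run_le[OF r] run_lt[OF r] by auto
    have "length (take (h - l) (fst (rs ! a))) = h - l" using len[of a] ab by simp
    moreover have "\<forall>i\<in>{a..b}. take (h - l) (fst (rs ! i)) = take (h - l) (fst (rs ! a))"
      using run_eq[OF r] by blast
    ultimately show "same_subtree_run h l rs a b" unfolding same_subtree_run_def using ab by blast
  qed
qed

lemma nblocks_eq:
  assumes len: "\<And>i. i < length rs \<Longrightarrow> length (fst (rs ! i)) = h" and ne: "rs \<noteq> []"
  shows "nblocks h l rs = Suc (card {i. Suc i < length rs \<and> take (h - l) (fst (rs ! i)) \<noteq> take (h - l) (fst (rs ! Suc i))})"
proof -
  have "blocks h l rs = {{a..b} | a b. run (\<lambda>i. take (h - l) (fst (rs ! i))) (length rs) a b \<and>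
     (\<forall>a' b'. run (\<lambda>i. take (h - l) (fst (rs ! i))) (length rs) a' b' \<and> {a..b} \<subseteq> {a'..b'} \<longrightarrow> {a'..b'} = {a..b})}"
    unfolding blocks_def by (simp only: ssr_run[OF len])
  then show ?thesis unfolding nblocks_def
    using blocks_card[of "length rs" "\<lambda>i. take (h - l) (fst (rs ! i))"] ne by simp
qed

theorem lemma6:
  fixes T :: "node set" and h :: nat and v0 :: node and R :: "req set"
    and es :: "event list" and ss :: "state list" and rs :: "req list"
  assumes "hst T h"
    and "v0 \<in> leaves T h"
    and "finite R"
    and "(v0, 0) \<in> R"
    and "\<forall>(v, t) \<in> R. v \<in> leaves T h \<and> t \<ge> 0"
    and "sync_exec h v0 R es ss"
    and "arrow_order (last ss) (v0, 0) R rs"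
  shows "total_cost (last ss) (v0, 0) R =
         (\<Sum>l < h. (real (nblocks h l rs) - real (nblocks h (Suc l) rs)) * delta (Suc l))"
proof -
  define s where "s = last ss"
  define n where "n = length rs"
  have I: "Inv h s" using Inv_exec[OF assms(6)] s_def by simp
  have dist: "distinct rs" and setrs: "set rs = R" and ne: "rs \<noteq> []" and r0: "rs ! 0 = (v0, 0)"
    and pr: "\<And>i. Suc i < n \<Longrightarrow> pred s (rs ! Suc i) = Some (rs ! i)"
    using assms(7) unfolding arrow_order_def s_def n_def by auto
  have len: "length (fst (rs ! i)) = h" if "i < length rs" for i
  proof -
    have "rs ! i \<in> R" using that setrs by auto
    then have "fst (rs ! i) \<in> leaves T h" using assms(5) by (cases "rs ! i") auto
    then show ?thesis unfolding leaves_def by simp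
  qed
  define F where "F l i = take (h - l) (fst (rs ! i))" for l i
  define c where "c l = card {i. Suc i < n \<and> F l i \<noteq> F l (Suc i)}" for l
  have nb: "nblocks h l rs = Suc (c l)" for l
    using nblocks_eq[OF len ne, of l] unfolding c_def F_def n_def by simp
  have Rimg: "R - {(v0, 0)} = (\<lambda>i. rs ! Suc i) ` {..<n - 1}"
  proof
    show "R - {(v0, 0)} \<subseteq> (\<lambda>i. rs ! Suc i) ` {..<n - 1}"
    proof
      fix x assume x: "x \<in> R - {(v0, 0)}"
      then obtain j where j: "j < n" "x = rs ! j" using setrs unfolding n_def by (auto simp: in_set_conv_nth)
      have "j \<noteq> 0"
      proof
        assume "j = 0" then show False using x r0 j by simp
      qed
      then obtain i where "j = Suc i" by (cases j) auto
      then show "x \<in> (\<lambda>i. rs ! Suc i) ` {..<n - 1}" using j by auto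
    qed
    show "(\<lambda>i. rs ! Suc i) ` {..<n - 1} \<subseteq> R - {(v0, 0)}"
    proof
      fix x assume "x \<in> (\<lambda>i. rs ! Suc i) ` {..<n - 1}"
      then obtain i where i: "i < n - 1" "x = rs ! Suc i" by auto
      have "x \<in> R" using i setrs unfolding n_def by auto
      moreover have "x \<noteq> rs ! 0" using i dist ne nth_eq_iff_index_eq[OF dist, of "Suc i" 0] unfolding n_def by auto
      ultimately show "x \<in> R - {(v0, 0)}" using r0 by simp
    qed
  qed
  have inj: "inj_on (\<lambda>i. rs ! Suc i) {..<n - 1}"
    by (rule inj_onI) (use nth_eq_iff_index_eq[OF dist] n_def in auto)
  have "total_cost s (v0, 0) R = (\<Sum>i<n - 1. arrt s (rs ! Suc i) - snd (rs ! Suc i))"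
    unfolding total_cost_def Rimg sum.reindex[OF inj] by simp
  also have "... = (\<Sum>i<n - 1. D h (fst (rs ! Suc i)) (fst (rs ! i)))"
    by (rule sum.cong) (use InvD6[OF I pr] in auto)
  also have "... = (\<Sum>i<n - 1. \<Sum>l<h. if F l (Suc i) \<noteq> F l i then (2::real)^(l+1) else 0)"
    by (rule sum.cong) (use D_leaf len n_def F_def in auto)
  also have "... = (\<Sum>l<h. \<Sum>i<n - 1. if F l (Suc i) \<noteq> F l i then (2::real)^(l+1) else 0)"
    by (rule sum.swap)
  also have "... = (\<Sum>l<h. real (c l) * 2^(l+1))"
  proof (rule sum.cong)
    fix l assume "l \<in> {..<h}"
    have "(\<Sum>i<n - 1. if F l (Suc i) \<noteq> F l i then (2::real)^(l+1) else 0)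
        = (\<Sum>i\<in>{i\<in>{..<n - 1}. F l (Suc i) \<noteq> F l i}. (2::real)^(l+1))"
      by (rule sum.inter_filter[symmetric]) simp
    also have "{i\<in>{..<n - 1}. F l (Suc i) \<noteq> F l i} = {i. Suc i < n \<and> F l i \<noteq> F l (Suc i)}" by auto
    finally show "(\<Sum>i<n - 1. if F l (Suc i) \<noteq> F l i then (2::real)^(l+1) else 0) = real (c l) * 2^(l+1)"
      unfolding c_def by simp
  qed simp
  also have "... = (\<Sum>l<h. (real (c l) - real (c (Suc l))) * delta (Suc l))"
  proof -
    have ch: "c h = 0" unfolding c_def F_def by simp
    have d0: "delta 0 = 0" unfolding delta_def by simp
    have dd: "delta (Suc l) - delta l = 2^(l+1)" for l unfolding delta_def by simp
    show ?thesis using sum_parts[of "\<lambda>l. real (c l)" delta h] ch d0 dd by simp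
  qed
  also have "... = (\<Sum>l < h. (real (nblocks h l rs) - real (nblocks h (Suc l) rs)) * delta (Suc l))"
    unfolding nb by simp
  finally show ?thesis unfolding s_def .
qed

end
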